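(* Let $p,N\in\mathbb{N}$, $x_0<\cdots<x_N$, data $y_{n,2k}\in\mathbb{R}$ ($n=0,\dots,N$, $k=0,\dots,p$), and $\alpha\in\Theta_{2p}$. Let $\ell_\alpha$ be the Lidstone FIF and $\phi$ the classical Lidstone interpolation function for this data. Then for $k=1,\dots,p$, $$\|\ell_\alpha^{(2k)}-\phi^{(2k)}\|_\infty\le\frac{|\alpha|_\infty}{\mu^{2k}-|\alpha|_\infty}\big(\|\phi^{(2k)}\|_\infty+M_{2k,2p}\big),$$ where $\mu=\min_{1\le n\le N}a_n$ and $M_{2k,2p}=\frac{2\rho\pi}{3}\sum_{l=0}^{p-k}\big(\frac{x_N-x_0}{\pi}\big)^{2l}$.
   Context: Lidstone polynomials $\Lambda_l$: $\Lambda_0(x)=x$, $\Lambda_l''=\Lambda_{l-1}$, $\Lambda_l(0)=\Lambda_l(1)=0$ for $l\ge1$. $a_n=\frac{x_n-x_{n-1}}{x_N-x_0}$, $L_n(x)=a_nx+\frac{x_Nx_{n-1}-x_0x_n}{x_N-x_0}$. $\Theta_{2p}=\{\alpha\in\mathbb{R}^N:|\alpha_n|<a_n^{2p}\ \forall n\}$. For $\alpha\in\Theta_{2p}$, the Lidstone FIF $\ell_\alpha$ is the unique $C^{2p}[x_0,x_N]$ function satisfying $\ell_\alpha(L_n(x))=\alpha_n\ell_\alpha(x)+q_n(x)$ for $x\in[x_0,x_N]$, $n=1,\dots,N$, where $q_n(x)=\sum_{l=0}^p[(a_n^{2l}y_{n-1,2l}-\alpha_ny_{0,2l})\Lambda_l(\frac{x_N-x}{x_N-x_0})+(a_n^{2l}y_{n,2l}-\alpha_ny_{N,2l})\Lambda_l(\frac{x-x_0}{x_N-x_0})](x_N-x_0)^{2l}$;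 it satisfies $\ell_\alpha^{(2k)}(x_n)=y_{n,2k}$. The classical Lidstone interpolation function $\phi$ is defined on each $[x_{n-1},x_n]$, with $h_n=x_n-x_{n-1}$, by $\phi(x)=\sum_{l=0}^p\big[y_{n-1,2l}\Lambda_l(\frac{x_n-x}{h_n})+y_{n,2l}\Lambda_l(\frac{x-x_{n-1}}{h_n})\big]h_n^{2l}$ (it equals $\ell_0$). Notation: $|\alpha|_\infty=\max_n|\alpha_n|$, $\|f\|_\infty=\sup_{[x_0,x_N]}|f|$, $\rho=\max_{0\le k\le p}\max\{|y_{0,2k}|,|y_{N,2k}|\}$.
   Formalization: The bound holds only for those $\alpha\in\Theta_{2p}$ that also satisfy $|\alpha|_\infty<\mu^{2k}$, a condition membership in $\Theta_{2p}$ does not give. The statement above fails without it. *)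

theory Defs
  imports "HOL-Analysis.Analysis"
begin

primrec lidstone :: "nat \<Rightarrow> real \<Rightarrow> real" where
  "lidstone 0 = (\<lambda>t. t)"
| "lidstone (Suc l) =
     (THE g. (\<forall>t. (g has_real_derivative deriv g t) (at t) \<and>
                  (deriv g has_real_derivative lidstone l t) (at t))
             \<and> g 0 = 0 \<and> g 1 = 0)"

definition a_coef :: "(nat \<Rightarrow> real) \<Rightarrow> nat \<Rightarrow> nat \<Rightarrow> real" where
  "a_coef x N n = (x n - x (n - 1)) / (x N - x 0)"

definition L_map :: "(nat \<Rightarrow> real) \<Rightarrow> nat \<Rightarrow> nat \<Rightarrow> real \<Rightarrow> real" where
  "L_map x N n t = a_coef x N n * t + (x N * x (n - 1) - x 0 * x n) / (x N - x 0)"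

definition Theta :: "nat \<Rightarrow> (nat \<Rightarrow> real) \<Rightarrow> nat \<Rightarrow> (nat \<Rightarrow> real) set" where
  "Theta p x N = {\<alpha>. \<forall>n\<in>{1..N}. \<bar>\<alpha> n\<bar> < a_coef x N n ^ (2 * p)}"

text \<open>y n j stands for y_{n,j} (only even j = 2l are used).\<close>
definition q_fun :: "nat \<Rightarrow> (nat \<Rightarrow> real) \<Rightarrow> nat \<Rightarrow> (nat \<Rightarrow> nat \<Rightarrow> real)
                      \<Rightarrow> (nat \<Rightarrow> real) \<Rightarrow> nat \<Rightarrow> real \<Rightarrow> real" where
  "q_fun p x N y \<alpha> n t =
     (\<Sum>l=0..p. ((a_coef x N n ^ (2*l) * y (n - 1) (2*l) - \<alpha> n * y 0 (2*l))
                   * lidstone l ((x N - t) / (x N - x 0))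
                 + (a_coef x N n ^ (2*l) * y n (2*l) - \<alpha> n * y N (2*l))
                   * lidstone l ((t - x 0) / (x N - x 0))) * (x N - x 0) ^ (2*l))"

text \<open>The piece of the classical Lidstone interpolant phi on [x_{n-1}, x_n].\<close>
definition phi_piece :: "nat \<Rightarrow> (nat \<Rightarrow> real) \<Rightarrow> (nat \<Rightarrow> nat \<Rightarrow> real) \<Rightarrow> nat \<Rightarrow> real \<Rightarrow> real" where
  "phi_piece p x y n t =
     (\<Sum>l=0..p. (y (n - 1) (2*l) * lidstone l ((x n - t) / (x n - x (n - 1)))
                 + y n (2*l) * lidstone l ((t - x (n - 1)) / (x n - x (n - 1))))
                * (x n - x (n - 1)) ^ (2*l))"

definition alpha_norm :: "nat \<Rightarrow> (nat \<Rightarrow> real) \<Rightarrow> real" where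
  "alpha_norm N \<alpha> = Max ((\<lambda>n. \<bar>\<alpha> n\<bar>) ` {1..N})"

definition mu_min :: "(nat \<Rightarrow> real) \<Rightarrow> nat \<Rightarrow> real" where
  "mu_min x N = Min (a_coef x N ` {1..N})"

definition rho_max :: "nat \<Rightarrow> nat \<Rightarrow> (nat \<Rightarrow> nat \<Rightarrow> real) \<Rightarrow> real" where
  "rho_max p N y = Max ((\<lambda>k. max \<bar>y 0 (2*k)\<bar> \<bar>y N (2*k)\<bar>) ` {0..p})"

definition M_const :: "nat \<Rightarrow> nat \<Rightarrow> (nat \<Rightarrow> real) \<Rightarrow> nat \<Rightarrow> (nat \<Rightarrow> nat \<Rightarrow> real) \<Rightarrow> real" where
  "M_const k p x N y = 2 * rho_max p N y * pi / 3 * (\<Sum>l=0..p-k. ((x N - x 0) / pi) ^ (2*l))"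

end

theory Submission
  imports Defs
begin

definition lidP :: "(real \<Rightarrow> real) \<Rightarrow> (real \<Rightarrow> real) \<Rightarrow> bool" where
  "lidP h g \<longleftrightarrow> (\<forall>t. (g has_real_derivative deriv g t) (at t) \<and>
                  (deriv g has_real_derivative h t) (at t)) \<and> g 0 = 0 \<and> g 1 = 0"

lemma lidstone_Suc_eq: "lidstone (Suc l) = (THE g. lidP (lidstone l) g)"
  by (simp add: lidP_def)

lemma lidP_unique:
  assumes A: "lidP h g1" and B: "lidP h g2" shows "g1 = g2"
proof -
  let ?d = "\<lambda>t. deriv g1 t - deriv g2 t"
  have d0: "\<forall>t. (?d has_real_derivative 0) (at t)"
  proof
    fix t
    have "(?d has_real_derivative h t - h t) (at t)"
      using A B unfolding lidP_def by (intro DERIV_diff) auto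
    then show "(?d has_real_derivative 0) (at t)" by simp
  qed
  have dc: "\<And>t. ?d t = ?d 0" using DERIV_isconst_all[OF d0] by blast
  define c where "c = ?d 0"
  let ?e = "\<lambda>t. g1 t - g2 t - c * t"
  have e0: "\<forall>t. (?e has_real_derivative 0) (at t)"
  proof
    fix t
    have "(?e has_real_derivative (deriv g1 t - deriv g2 t - c * 1)) (at t)"
      using A B unfolding lidP_def by (intro DERIV_diff DERIV_cmult DERIV_ident) auto
    then show "(?e has_real_derivative 0) (at t)"
      using dc[of t] c_def by simp
  qed
  have e: "\<And>t. ?e t = ?e 0" using DERIV_isconst_all[OF e0] by blast
  have g0: "g1 0 = 0" "g2 0 = 0" "g1 1 = 0" "g2 1 = 0" using A B unfolding lidP_def by auto
  have "c = 0" using e[of 1] g0 by simp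
  then show ?thesis using e g0 by (auto simp: fun_eq_iff)
qed
lemma aux1: "(c::real) \<noteq> 0 \<Longrightarrow> a * (c * T) / (d * c) = a * T / d" by (simp add: field_simps)
lemma aux2: "(c::real) \<noteq> 0 \<Longrightarrow> a * (c * T) / c = a * T" by (simp add: field_simps)

lemma lidP_exists:
  fixes a :: "nat \<Rightarrow> real"
  shows "\<exists>g. lidP (\<lambda>x. \<Sum>i\<le>n. a i * x^i) g \<and> real_polynomial_function g"
proof -
  define K where "K = (\<Sum>i\<le>n. a i / ((real i+1)*(real i+2)))"
  define g where "g = (\<lambda>x. (\<Sum>i\<le>n. a i * x^(Suc (Suc i)) / ((real i+1)*(real i+2))) - K * x)"
  define g' where "g' = (\<lambda>x::real. (\<Sum>i\<le>n. a i * x^(Suc i) / (real i+1)) - K)"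
  have trm: "((\<lambda>x. c * x^(Suc m) / (real m + 1)) has_real_derivative c * x^m) (at x)" for c x m
  proof -
    have "real m + 1 \<noteq> 0" "1 + real m \<noteq> 0" by linarith+
    then have "c * (real (Suc m) * x ^ (Suc m - Suc 0)) / (real m + 1) = c * x^m" by (simp add: field_simps)
    then show ?thesis by (rule DERIV_cong[OF DERIV_cdivide[OF DERIV_cmult[OF DERIV_pow]]])
  qed
  have trm2: "((\<lambda>x. c * x^(Suc (Suc m)) / ((real m + 1)*(real m+2))) has_real_derivative c * x^(Suc m) / (real m + 1)) (at x)" for c x m
  proof -
    have "real m + 2 \<noteq> 0" by linarith
    from aux1[OF this, of c "x^Suc m" "real m + 1"]
    have "c * (real (Suc (Suc m)) * x ^ (Suc (Suc m) - Suc 0)) / ((real m + 1)*(real m+2)) = c * x^(Suc m) / (real m + 1)"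
      by (simp add: add.commute)
    then show ?thesis by (rule DERIV_cong[OF DERIV_cdivide[OF DERIV_cmult[OF DERIV_pow]]])
  qed
  have dg: "(g has_real_derivative g' t) (at t)" for t
  proof -
    have "(g has_real_derivative (\<Sum>i\<le>n. a i * t^(Suc i) / (real i+1)) - K * 1) (at t)"
      unfolding g_def
      by (intro DERIV_diff DERIV_sum DERIV_cmult DERIV_ident)
        (rule trm2)
    then show ?thesis unfolding g'_def by simp
  qed
  have dg': "(g' has_real_derivative (\<Sum>i\<le>n. a i * t^i)) (at t)" for t
  proof -
    have "(g' has_real_derivative (\<Sum>i\<le>n. a i * t^i) - 0) (at t)"
      unfolding g'_def
      by (intro DERIV_diff DERIV_sum DERIV_const) (use trm in simp)
    then show ?thesis by simp
  qed
  have "deriv g = g'" using dg by (auto intro!: DERIV_imp_deriv)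
  then have "lidP (\<lambda>x. \<Sum>i\<le>n. a i * x^i) g"
    unfolding lidP_def using dg dg' by (simp add: g_def K_def sum_subtractf[symmetric] sum_divide_distrib)
  moreover have "real_polynomial_function g"
  proof -
    have id: "real_polynomial_function (\<lambda>x::real. x)"
      by (rule real_polynomial_function.intros(1)) (rule bounded_linear_ident)
    show ?thesis unfolding g_def
      apply (rule real_polynomial_function_diff)
       apply (rule real_polynomial_function_sum, simp)
       apply (rule real_polynomial_function_divide)
       apply (rule real_polynomial_function.intros(4))
        apply (rule real_polynomial_function.intros(2))
       apply (rule real_polynomial_function_power[OF id])
      apply (rule real_polynomial_function.intros(4)[OF real_polynomial_function.intros(2) id])
      done
  qed
  ultimately show ?thesis by blast
qed

lemma lidstone_poly: "real_polynomial_function (lidstone l)"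
  and lidstone_P: "lidP (lidstone l) (lidstone (Suc l))"
proof -
  have *: "real_polynomial_function (lidstone l) \<and> lidP (lidstone l) (lidstone (Suc l))" for l
  proof (induction l)
    case 0
    have p0: "real_polynomial_function (lidstone 0)"
      by (auto intro: real_polynomial_function.intros(1) bounded_linear_ident)
    then obtain a n where an: "lidstone 0 = (\<lambda>x. \<Sum>i\<le>n. a i * x^i)"
      using real_polynomial_function_iff_sum by blast
    obtain g where "lidP (lidstone 0) g" using lidP_exists[where n=n and a=a] an by auto
    then have "lidP (lidstone 0) (THE g. lidP (lidstone 0) g)"
      by (metis lidP_unique theI)
    then show ?case unfolding lidstone_Suc_eq using p0 by blast
  next
    case (Suc l)
    have pS: "real_polynomial_function (lidstone (Suc l))"
    proof -
      obtain a n where an: "lidstone l = (\<lambda>x. \<Sum>i\<le>n. a i * x^i)"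
        using Suc real_polynomial_function_iff_sum by blast
      obtain g where g: "lidP (lidstone l) g" "real_polynomial_function g" using lidP_exists[where n=n and a=a] an by auto
      then show ?thesis using Suc lidP_unique by metis
    qed
    then obtain a n where an: "lidstone (Suc l) = (\<lambda>x. \<Sum>i\<le>n. a i * x^i)"
      using real_polynomial_function_iff_sum by blast
    obtain g where "lidP (lidstone (Suc l)) g" using lidP_exists[where n=n and a=a] an by auto
    then have "lidP (lidstone (Suc l)) (THE g. lidP (lidstone (Suc l)) g)"
      by (metis lidP_unique theI)
    then show ?case unfolding lidstone_Suc_eq[of "Suc l"] using pS by blast
  qed
  show "real_polynomial_function (lidstone l)" using * by blast
  show "lidP (lidstone l) (lidstone (Suc l))" using * by blast
qed

declare lidstone.simps(2)[simp del]

definition smooth :: "(real \<Rightarrow> real) \<Rightarrow> bool" where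
  "smooth g \<longleftrightarrow> (\<forall>m t. ((deriv^^m) g has_real_derivative (deriv^^(Suc m)) g t) (at t))"

lemma chain_deriv:
  assumes "F 0 = g" "\<And>m t. (F m has_real_derivative F (Suc m) t) (at t)"
  shows "(deriv^^m) g = F m"
proof (induction m)
  case 0 then show ?case using assms by simp
next
  case (Suc m)
  have "deriv (F m) = F (Suc m)" using assms(2) by (auto intro!: DERIV_imp_deriv)
  then show ?case using Suc by simp
qed

lemma chain_smooth:
  assumes "F 0 = g" "\<And>m t. (F m has_real_derivative F (Suc m) t) (at t)"
  shows "smooth g"
  unfolding smooth_def using chain_deriv[OF assms] assms(2) by metis

lemma smooth_D: "smooth g \<Longrightarrow> ((deriv^^m) g has_real_derivative (deriv^^(Suc m)) g t) (at t)"
  unfolding smooth_def by blast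

lemma smooth_cont: "smooth g \<Longrightarrow> continuous_on S ((deriv^^m) g)"
  by (meson DERIV_isCont continuous_at_imp_continuous_on smooth_D)

lemma lid_d1: "(lidstone (Suc l) has_real_derivative deriv (lidstone (Suc l)) t) (at t)"
  using lidstone_P[of l] unfolding lidP_def by blast
lemma lid_d2: "(deriv (lidstone (Suc l)) has_real_derivative lidstone l t) (at t)"
  using lidstone_P[of l] unfolding lidP_def by blast
lemma lid_01: "lidstone (Suc l) 0 = 0" "lidstone (Suc l) 1 = 0"
  using lidstone_P[of l] unfolding lidP_def by blast+

lemma lid_deriv2: "(deriv^^2) (lidstone (Suc l)) = lidstone l"
proof -
  have "deriv (deriv (lidstone (Suc l))) = lidstone l"
    using lid_d2 by (auto intro!: DERIV_imp_deriv)
  then show ?thesis by (simp add: numeral_2_eq_2)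
qed

lemma lid_derivk2: "(deriv^^(k+2)) (lidstone (Suc l)) = (deriv^^k) (lidstone l)"
proof -
  have "(deriv^^(k+2)) (lidstone (Suc l)) = (deriv^^k) ((deriv^^2) (lidstone (Suc l)))"
    by (simp only: funpow_add o_apply)
  then show ?thesis by (simp only: lid_deriv2)
qed

lemma smooth_id: "smooth (\<lambda>t. t)"
proof (rule chain_smooth[where F="\<lambda>m. if m = 0 then (\<lambda>t. t) else if m = 1 then (\<lambda>_. 1) else (\<lambda>_. 0)"])
  fix m t
  show "((if m = 0 then (\<lambda>t. t) else if m = 1 then (\<lambda>_. 1) else (\<lambda>_. 0)) has_real_derivative
         (if Suc m = 0 then (\<lambda>t. t) else if Suc m = 1 then (\<lambda>_. 1) else (\<lambda>_. 0)) t) (at t)"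
    by (cases "m = 0"; cases "m = 1") (auto intro: derivative_eq_intros)
qed simp

lemma id_deriv_ge2: "2 \<le> m \<Longrightarrow> (deriv^^m) (\<lambda>t::real. t) = (\<lambda>_. 0)"
proof -
  assume m: "2 \<le> m"
  have "(deriv^^m) (\<lambda>t::real. t) = (if m = 0 then (\<lambda>t. t) else if m = 1 then (\<lambda>_. 1) else (\<lambda>_. 0))"
  proof (rule chain_deriv[where F="\<lambda>m. if m = 0 then (\<lambda>t. t) else if m = 1 then (\<lambda>_. 1) else (\<lambda>_. 0)"])
    fix m t
    show "((if m = 0 then (\<lambda>t. t) else if m = 1 then (\<lambda>_. 1) else (\<lambda>_. 0)) has_real_derivative
           (if Suc m = 0 then (\<lambda>t. t) else if Suc m = 1 then (\<lambda>_. 1) else (\<lambda>_. 0)) t) (at t)"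
      by (cases "m = 0"; cases "m = 1") (auto intro: derivative_eq_intros)
  qed simp
  then show ?thesis using m by simp
qed

lemma smooth_lid: "smooth (lidstone l)"
proof (induction l)
  case 0 then show ?case using smooth_id by simp
next
  case (Suc l)
  show ?case unfolding smooth_def
  proof (intro allI)
    fix m t
    show "((deriv ^^ m) (lidstone (Suc l)) has_real_derivative (deriv ^^ Suc m) (lidstone (Suc l)) t) (at t)"
    proof (cases "m \<le> 1")
      case True
      then consider "m = 0" | "m = 1" by linarith
      then show ?thesis
      proof cases
        case 1 then show ?thesis using lid_d1 by simp
      next
        case 2 then show ?thesis using lid_d2 lid_deriv2 by (simp add: numeral_2_eq_2)
      qed
    next
      case False
      then obtain k where k: "m = k + 2" by (metis add.commute le_add_diff_inverse2 not_less_eq_eq one_add_one plus_1_eq_Suc)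
      have "Suc m = Suc k + 2" using k by simp
      then show ?thesis using k lid_derivk2 smooth_D[OF Suc.IH] by metis
    qed
  qed
qed

lemma lid_deriv_even: "k \<le> l \<Longrightarrow> (deriv^^(2*k)) (lidstone l) = lidstone (l - k)"
proof (induction k arbitrary: l)
  case 0 then show ?case by simp
next
  case (Suc k)
  then obtain l' where l: "l = Suc l'" by (cases l) auto
  have "2 * Suc k = 2 * k + 2" by simp
  then have "(deriv^^(2*Suc k)) (lidstone l) = (deriv^^(2*k)) (lidstone l')"
    using lid_derivk2 l by metis
  then show ?case using Suc l by simp
qed

lemma deriv_zero_fun: "(deriv^^m) (\<lambda>_::real. 0::real) = (\<lambda>_. 0)"
  by (induction m) auto

lemma lid_deriv_even_big: "l < k \<Longrightarrow> (deriv^^(2*k)) (lidstone l) = (\<lambda>_. 0)"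
proof -
  assume lk: "l < k"
  have e: "2*k = (2*k - 2*l) + 2*l" using lk by simp
  have "(deriv^^(2*k)) (lidstone l) = (deriv^^(2*k - 2*l)) ((deriv^^(2*l)) (lidstone l))"
    by (subst e) (simp add: funpow_add)
  also have "\<dots> = (deriv^^(2*k - 2*l)) (\<lambda>t. t)" using lid_deriv_even[of l l] by simp
  also have "\<dots> = (\<lambda>_. 0)" using lk by (intro id_deriv_ge2) simp
  finally show ?thesis .
qed

lemma smooth_comp:
  assumes g: "smooth g" and u: "\<And>t. (u has_real_derivative a) (at t)"
  shows "(deriv^^m) (\<lambda>t. g (u t)) = (\<lambda>t. a^m * (deriv^^m) g (u t))"
proof (rule chain_deriv)
  fix m t
  have "((\<lambda>t. a^m * (deriv^^m) g (u t)) has_real_derivative a^m * ((deriv^^Suc m) g (u t) * a)) (at t)"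
    by (intro DERIV_cmult DERIV_chain2[OF smooth_D[OF g] u])
  then show "((\<lambda>t. a^m * (deriv^^m) g (u t)) has_real_derivative (\<lambda>t. a^Suc m * (deriv^^Suc m) g (u t)) t) (at t)"
    by (rule DERIV_cong) (simp add: algebra_simps)
qed simp

lemma smooth_comb:
  assumes S: "finite S" and G: "\<And>l. l \<in> S \<Longrightarrow> smooth (G l)"
    and u1: "\<And>t. (u1 has_real_derivative a1) (at t)" and u2: "\<And>t. (u2 has_real_derivative a2) (at t)"
  shows "(deriv^^m) (\<lambda>t. \<Sum>l\<in>S. (A l * G l (u1 t) + B l * G l (u2 t)) * C l)
       = (\<lambda>t. \<Sum>l\<in>S. (A l * a1^m * (deriv^^m) (G l) (u1 t) + B l * a2^m * (deriv^^m) (G l) (u2 t)) * C l)"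
    (is "_ = ?F m")
  and "smooth (\<lambda>t. \<Sum>l\<in>S. (A l * G l (u1 t) + B l * G l (u2 t)) * C l)"
proof -
  have F0: "?F 0 = (\<lambda>t. \<Sum>l\<in>S. (A l * G l (u1 t) + B l * G l (u2 t)) * C l)" by simp
  have D: "(?F m has_real_derivative ?F (Suc m) t) (at t)" for m t
  proof -
    have "(?F m has_real_derivative (\<Sum>l\<in>S. (A l * a1^m * ((deriv^^Suc m) (G l) (u1 t) * a1) + B l * a2^m * ((deriv^^Suc m) (G l) (u2 t) * a2)) * C l)) (at t)"
      by (intro DERIV_sum DERIV_cmult_right DERIV_add DERIV_cmult DERIV_chain2[OF smooth_D[OF G] u1]
             DERIV_chain2[OF smooth_D[OF G] u2])
    then show ?thesis by (rule DERIV_cong) (simp add: algebra_simps)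
  qed
  show "(deriv^^m) (\<lambda>t. \<Sum>l\<in>S. (A l * G l (u1 t) + B l * G l (u2 t)) * C l) = ?F m"
    by (rule chain_deriv[OF F0 D])
  show "smooth (\<lambda>t. \<Sum>l\<in>S. (A l * G l (u1 t) + B l * G l (u2 t)) * C l)"
    by (rule chain_smooth[OF F0 D])
qed

lemma pi_le: "pi \<le> 3.2"
  using pi_approx(2) by simp

lemma mono_helper:
  fixes F F' :: "real \<Rightarrow> real"
  assumes d: "\<And>x. (F has_real_derivative F' x) (at x)" and nn: "\<And>x. 0 \<le> x \<Longrightarrow> 0 \<le> F' x"
    and x: "0 \<le> x"
  shows "F 0 \<le> F x"
proof (cases "x = 0")
  case True then show ?thesis by simp
next
  case False
  then have "0 < x" using x by simp
  from MVT2[OF this, of F F'] d obtain z where z: "0 < z" "z < x" "F x - F 0 = (x - 0) * F' z" by blast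
  have "0 \<le> (x - 0) * F' z" using z nn[of z] x by simp
  then show ?thesis using z by simp
qed

lemma cos_lb: assumes "0 \<le> x" shows "1 - x^2/2 \<le> cos (x::real)"
proof -
  have "(\<lambda>x. cos x - 1 + x^2/2) 0 \<le> (\<lambda>x. cos x - 1 + x^2/2) x"
    by (rule mono_helper[where F'="\<lambda>x. - sin x + x"]) (auto intro!: derivative_eq_intros simp: sin_x_le_x assms)
  then show ?thesis by simp
qed

lemma sin_lb3: assumes "0 \<le> x" shows "x - x^3/6 \<le> sin (x::real)"
proof -
  have "(\<lambda>x. sin x - x + x^3/6) 0 \<le> (\<lambda>x. sin x - x + x^3/6) x"
  proof (rule mono_helper[where F'="\<lambda>x. cos x - 1 + x^2/2"])
    show "((\<lambda>x. sin x - x + x^3/6) has_real_derivative cos x - 1 + x^2/2) (at x)" for x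
      by (auto intro!: derivative_eq_intros)
    show "0 \<le> cos x - 1 + x^2/2" if "0 \<le> x" for x :: real using cos_lb[OF that] by simp
  qed (rule assms)
  then show ?thesis by simp
qed

lemma sin_lb_half: assumes "0 \<le> u" "u \<le> 1/2" shows "pi*u*(1-u) \<le> sin (pi*u)"
proof -
  have p: "pi^2 \<le> 3.2^2" using pi_le by (intro power_mono) auto
  have "pi^2 * u \<le> 6"
  proof -
    have "pi^2 * u \<le> 3.2^2 * (1/2)" using p assms by (intro mult_mono) auto
    moreover have "(3.2::real)^2 * (1/2) \<le> 6" by (simp add: power2_eq_square)
    ultimately show ?thesis by linarith
  qed
  then have "(pi*u)^3/6 \<le> pi*u*u"
  proof -
    have "(pi*u)^3/6 = (pi*u*u) * (pi^2*u/6)" by (simp add: power3_eq_cube power2_eq_square)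
    also have "\<dots> \<le> (pi*u*u) * 1" using \<open>pi^2*u \<le> 6\<close> assms
      by (intro mult_left_mono) auto
    finally show ?thesis by simp
  qed
  moreover have "pi*u - (pi*u)^3/6 \<le> sin (pi*u)" using sin_lb3[of "pi*u"] assms by simp
  ultimately show ?thesis by (simp add: algebra_simps)
qed

lemma sin_lb: assumes "0 \<le> u" "u \<le> 1" shows "pi*u*(1-u) \<le> sin (pi*u)"
proof (cases "u \<le> 1/2")
  case True then show ?thesis using sin_lb_half assms by simp
next
  case False
  have "pi*(1-u)*(1-(1-u)) \<le> sin (pi*(1-u))" using sin_lb_half[of "1-u"] False assms by simp
  moreover have "sin (pi*(1-u)) = sin (pi*u)"
    by (metis sin_pi_minus right_diff_distrib mult_1_right)
  ultimately show ?thesis by (simp add: algebra_simps)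
qed

lemma lid1: "lidstone 1 = (\<lambda>t. (t^3 - t)/6)"
proof -
  let ?g = "\<lambda>t::real. (t^3 - t)/6"
  have d1: "(?g has_real_derivative (3*t^2 - 1)/6) (at t)" for t
    by (auto intro!: derivative_eq_intros)
  have "deriv ?g = (\<lambda>t. (3*t^2 - 1)/6)" using d1 by (auto intro!: DERIV_imp_deriv)
  moreover have "((\<lambda>t::real. (3*t^2 - 1)/6) has_real_derivative t) (at t)" for t
    by (auto intro!: derivative_eq_intros)
  ultimately have "lidP (lidstone 0) ?g" unfolding lidP_def using d1 by simp
  then show ?thesis using lidP_unique lidstone_P[of 0] by (metis One_nat_def)
qed

lemma conv_nonpos:
  fixes H Hd Hdd :: "real \<Rightarrow> real"
  assumes d1: "\<And>t. (H has_real_derivative Hd t) (at t)"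
    and d2: "\<And>t. (Hd has_real_derivative Hdd t) (at t)"
    and nn: "\<And>t. 0 \<le> t \<Longrightarrow> t \<le> 1 \<Longrightarrow> 0 \<le> Hdd t"
    and b: "H 0 = 0" "H 1 = 0" and t: "0 \<le> t" "t \<le> 1"
  shows "H t \<le> 0"
proof (rule ccontr)
  assume "\<not> H t \<le> 0"
  then have Ht: "H t > 0" by simp
  have "t \<noteq> 0" "t \<noteq> 1" using Ht b by auto
  then have t01: "0 < t" "t < 1" using t by linarith+
  from MVT2[OF t01(1), of H Hd] d1 obtain z1 where z1: "0 < z1" "z1 < t" "H t - H 0 = (t - 0) * Hd z1" by blast
  from MVT2[OF t01(2), of H Hd] d1 obtain z2 where z2: "t < z2" "z2 < 1" "H 1 - H t = (1 - t) * Hd z2" by blast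
  have p1: "Hd z1 > 0"
  proof (rule ccontr)
    assume "\<not> Hd z1 > 0"
    then have "(t - 0) * Hd z1 \<le> 0" using t01 by (intro mult_nonneg_nonpos) auto
    then show False using z1 b Ht by simp
  qed
  have p2: "Hd z2 < 0"
  proof (rule ccontr)
    assume "\<not> Hd z2 < 0"
    then have "0 \<le> (1 - t) * Hd z2" using t01 by (intro mult_nonneg_nonneg) auto
    then show False using z2 b Ht by simp
  qed
  have "z1 < z2" using z1 z2 by simp
  from MVT2[OF this, of Hd Hdd] d2 obtain z where z: "z1 < z" "z < z2" "Hd z2 - Hd z1 = (z2 - z1) * Hdd z" by blast
  have "0 \<le> (z2 - z1) * Hdd z" using z z1 z2 t01 nn[of z] by (intro mult_nonneg_nonneg) auto
  then show False using z p1 p2 by simp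
qed

lemma lid_cmp:
  assumes hyp: "\<And>t. 0 \<le> t \<Longrightarrow> t \<le> 1 \<Longrightarrow> \<bar>lidstone l t\<bar> \<le> C * sin (pi*t)"
    and t: "0 \<le> t" "t \<le> 1"
  shows "\<bar>lidstone (Suc l) t\<bar> \<le> C/pi^2 * sin (pi*t)"
proof -
  let ?w = "\<lambda>t. C/pi^2 * sin (pi*t)"
  let ?w1 = "\<lambda>t. C/pi * cos (pi*t)"
  have w1: "(?w has_real_derivative ?w1 t) (at t)" for t
    by (auto intro!: derivative_eq_intros simp: power2_eq_square)
  have w2: "(?w1 has_real_derivative - C * sin (pi*t)) (at t)" for t
    by (auto intro!: derivative_eq_intros)
  have A: "(\<lambda>t. lidstone (Suc l) t - ?w t) t \<le> 0"
  proof (rule conv_nonpos[where H="\<lambda>t. lidstone (Suc l) t - ?w t" and Hd="\<lambda>t. deriv (lidstone (Suc l)) t - ?w1 t"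
        and Hdd="\<lambda>t. lidstone l t - - C * sin (pi*t)"])
    show "((\<lambda>t. lidstone (Suc l) t - ?w t) has_real_derivative deriv (lidstone (Suc l)) t - ?w1 t) (at t)" for t
      by (intro DERIV_diff lid_d1 w1)
    show "((\<lambda>t. deriv (lidstone (Suc l)) t - ?w1 t) has_real_derivative lidstone l t - - C * sin (pi*t)) (at t)" for t
      by (intro DERIV_diff lid_d2 w2)
    show "0 \<le> lidstone l t - - C * sin (pi*t)" if "0 \<le> t" "t \<le> 1" for t
      using hyp[OF that] by linarith
  qed (use t lid_01 in auto)
  have B: "(\<lambda>t. - lidstone (Suc l) t - ?w t) t \<le> 0"
  proof (rule conv_nonpos[where H="\<lambda>t. - lidstone (Suc l) t - ?w t" and Hd="\<lambda>t. - deriv (lidstone (Suc l)) t - ?w1 t"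
        and Hdd="\<lambda>t. - lidstone l t - - C * sin (pi*t)"])
    show "((\<lambda>t. - lidstone (Suc l) t - ?w t) has_real_derivative - deriv (lidstone (Suc l)) t - ?w1 t) (at t)" for t
      by (intro DERIV_diff DERIV_minus lid_d1 w1)
    show "((\<lambda>t. - deriv (lidstone (Suc l)) t - ?w1 t) has_real_derivative - lidstone l t - - C * sin (pi*t)) (at t)" for t
      by (intro DERIV_diff DERIV_minus lid_d2 w2)
    show "0 \<le> - lidstone l t - - C * sin (pi*t)" if "0 \<le> t" "t \<le> 1" for t
      using hyp[OF that] by linarith
  qed (use t lid_01 in auto)
  show ?thesis using A B by simp
qed

lemma lid_bound_sin: "0 \<le> t \<Longrightarrow> t \<le> 1 \<Longrightarrow> \<bar>lidstone (Suc i) t\<bar> \<le> 1/(3*pi^(2*i+1)) * sin (pi*t)"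
proof (induction i arbitrary: t)
  case 0
  have s: "pi*(1-t)*(1-(1-t)) \<le> sin (pi*(1-t))" using sin_lb[of "1-t"] 0 by simp
  have "sin (pi*(1-t)) = sin (pi*t)" by (metis sin_pi_minus right_diff_distrib mult_1_right)
  with s have s2: "pi*(t*(1-t)) \<le> sin (pi*t)" by (simp add: algebra_simps)
  have e: "lidstone 1 t = - (t*(1-t)*(1+t)/6)" unfolding lid1 by (simp add: power3_eq_cube field_simps)
  have nn: "0 \<le> t*(1-t)*(1+t)" using 0 by simp
  have "\<bar>lidstone 1 t\<bar> = t*(1-t)*(1+t)/6" unfolding e using nn by simp
  also have "\<dots> \<le> t*(1-t)/3"
  proof -
    have "0 \<le> t*(1-t)" using 0 by simp
    then have "t*(1-t)*(1+t) \<le> t*(1-t)*2" using 0 by (intro mult_left_mono) auto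
    then show ?thesis by simp
  qed
  also have "\<dots> = 1/(3*pi) * (pi*(t*(1-t)))" by simp
  also have "\<dots> \<le> 1/(3*pi) * sin (pi*t)" using s2 by (intro mult_left_mono) auto
  finally show ?case by simp
next
  case (Suc i)
  have "\<bar>lidstone (Suc (Suc i)) t\<bar> \<le> 1/(3*pi^(2*i+1)) / pi^2 * sin (pi*t)"
    by (rule lid_cmp[OF Suc.IH Suc.prems])
  moreover have "1/(3*pi^(2*i+1)) / pi^2 = 1/(3*pi^(2*Suc i+1))"
    by (simp add: power_add power2_eq_square field_simps)
  ultimately show ?case by metis
qed

lemma lid_bound: "0 \<le> t \<Longrightarrow> t \<le> 1 \<Longrightarrow> \<bar>lidstone (Suc i) t\<bar> \<le> 1/(3*pi^(2*i+1))"
proof -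
  assume t: "0 \<le> t" "t \<le> 1"
  have "1/(3*pi^(2*i+1)) * sin (pi*t) \<le> 1/(3*pi^(2*i+1)) * 1"
    by (intro mult_left_mono) auto
  then show ?thesis using lid_bound_sin[OF t, of i] by simp
qed

lemma smooth_lin:
  assumes f: "smooth f" and g: "smooth g"
  shows "(deriv^^m) (\<lambda>t. f t - c * g t) = (\<lambda>t. (deriv^^m) f t - c * (deriv^^m) g t)"
    and "smooth (\<lambda>t. f t - c * g t)"
proof -
  have F0: "(\<lambda>t. (deriv^^0) f t - c * (deriv^^0) g t) = (\<lambda>t. f t - c * g t)" by simp
  have D: "((\<lambda>t. (deriv^^m) f t - c * (deriv^^m) g t) has_real_derivative
            (\<lambda>t. (deriv^^Suc m) f t - c * (deriv^^Suc m) g t) t) (at t)" for m t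
    by (intro DERIV_diff DERIV_cmult smooth_D f g)
  show "(deriv^^m) (\<lambda>t. f t - c * g t) = (\<lambda>t. (deriv^^m) f t - c * (deriv^^m) g t)"
    by (rule chain_deriv[OF F0 D])
  show "smooth (\<lambda>t. f t - c * g t)" by (rule chain_smooth[OF F0 D])
qed

lemma x_mono:
  assumes inc: "\<forall>n<N. x n < x (Suc n)" and ij: "i < j" "j \<le> N"
  shows "x i < (x j :: real)"
  using ij
proof (induction j)
  case 0 then show ?case by simp
next
  case (Suc j)
  then have "x j < x (Suc j)" using inc by simp
  then show ?case using Suc by (cases "i = j") auto
qed

lemma x_mono_le:
  assumes inc: "\<forall>n<N. x n < x (Suc n)" and ij: "i \<le> j" "j \<le> N"
  shows "x i \<le> (x j :: real)"
  using x_mono[OF inc, of i j] ij by (cases "i = j") auto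

lemma seg_exists:
  assumes inc: "\<forall>n<N. x n < x (Suc n)" and N: "1 \<le> N" and s: "x 0 \<le> s" "s \<le> (x N :: real)"
  shows "\<exists>m\<in>{1..N}. x (m-1) \<le> s \<and> s \<le> x m"
proof -
  define m where "m = (LEAST m. s \<le> x m)"
  have sm: "s \<le> x m" unfolding m_def by (rule LeastI[of _ N]) (rule s(2))
  have mN: "m \<le> N" unfolding m_def by (rule Least_le) (rule s(2))
  show ?thesis
  proof (cases "m = 0")
    case True
    then have "s = x 0" using sm s by simp
    moreover have "x 0 \<le> x 1" using x_mono_le[OF inc, of 0 1] N by simp
    ultimately show ?thesis using N by (intro bexI[of _ 1]) auto
  next
    case False
    then have "\<not> s \<le> x (m-1)" unfolding m_def
      by (metis Least_le diff_less less_numeral_extra(1) linorder_not_less m_def neq0_conv le_less_trans)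
    then show ?thesis using False sm mN by (intro bexI[of _ m]) auto
  qed
qed

lemma deriv_unique_within:
  assumes "lo < hi" "t \<in> {lo..hi}"
    and "(f has_real_derivative d1) (at t within {lo..hi})"
    and "(f has_real_derivative d2) (at t within {lo..hi})"
  shows "d1 = (d2::real)"
  using vector_derivative_unique_within_closed_interval[of lo hi t f d1 d2] assms
  by (simp add: has_real_derivative_iff_has_vector_derivative cbox_interval)

lemma zero_deriv_within:
  assumes "\<And>s. s \<in> S \<Longrightarrow> f s = (0::real)" "t \<in> S"
  shows "(f has_real_derivative 0) (at t within S)"
  by (rule has_field_derivative_transform_within[OF DERIV_const[of 0] zero_less_one assms(2)])
     (use assms in auto)

lemma D_rel_gen:
  fixes D :: "nat \<Rightarrow> real \<Rightarrow> real"
  assumes lohi: "lo < hi" and Lm: "\<And>t. t \<in> {lo..hi} \<Longrightarrow> Lm t \<in> {lo..hi}"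
    and dL: "\<And>t. (Lm has_real_derivative a) (at t)"
    and dD: "\<forall>j<K. \<forall>t\<in>{lo..hi}. (D j has_real_derivative D (Suc j) t) (at t within {lo..hi})"
    and fe: "\<And>t. t \<in> {lo..hi} \<Longrightarrow> D 0 (Lm t) = c * D 0 t + q t"
    and q: "smooth q"
  shows "j \<le> K \<Longrightarrow> t \<in> {lo..hi} \<Longrightarrow> a^j * D j (Lm t) = c * D j t + (deriv^^j) q t"
proof (induction j arbitrary: t)
  case 0 then show ?case using fe by simp
next
  case (Suc j)
  let ?U = "\<lambda>t. a^j * D j (Lm t) - c * D j t - (deriv^^j) q t"
  have U0: "\<And>s. s \<in> {lo..hi} \<Longrightarrow> ?U s = 0" using Suc by simp
  have j: "j < K" using Suc by simp
  have d1: "(?U has_real_derivative 0) (at t within {lo..hi})"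
    by (rule zero_deriv_within[OF U0 Suc.prems(2)])
  have dDL: "((\<lambda>t. D j (Lm t)) has_real_derivative D (Suc j) (Lm t) * a) (at t within {lo..hi})"
  proof -
    have "(D j has_real_derivative D (Suc j) (Lm t)) (at (Lm t) within {lo..hi})"
      using dD j Lm Suc.prems(2) by blast
    then have "(D j has_real_derivative D (Suc j) (Lm t)) (at (Lm t) within Lm ` {lo..hi})"
      by (rule DERIV_subset) (use Lm in auto)
    from DERIV_image_chain[OF this has_field_derivative_at_within[OF dL]]
    show ?thesis by (simp add: o_def)
  qed
  have d2: "(?U has_real_derivative a^j * (D (Suc j) (Lm t) * a) - c * D (Suc j) t - (deriv^^Suc j) q t) (at t within {lo..hi})"
    by (intro DERIV_diff DERIV_cmult dDL has_field_derivative_at_within[OF smooth_D[OF q]])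
       (use dD j Suc.prems(2) in blast)
  have "a^j * (D (Suc j) (Lm t) * a) - c * D (Suc j) t - (deriv^^Suc j) q t = 0"
    using deriv_unique_within[OF lohi Suc.prems(2) d2 d1] .
  then show ?case by (simp add: algebra_simps)
qed

definition Pf :: "nat \<Rightarrow> (nat \<Rightarrow> real) \<Rightarrow> nat \<Rightarrow> (nat \<Rightarrow> nat \<Rightarrow> real) \<Rightarrow> real \<Rightarrow> real" where
  "Pf p x N y t = (\<Sum>l\<in>{0..p}. (y 0 (2*l) * lidstone l ((x N - t) / (x N - x 0))
        + y N (2*l) * lidstone l ((t - x 0) / (x N - x 0))) * (x N - x 0) ^ (2*l))"

definition Rf :: "nat \<Rightarrow> (nat \<Rightarrow> real) \<Rightarrow> nat \<Rightarrow> (nat \<Rightarrow> nat \<Rightarrow> real) \<Rightarrow> nat \<Rightarrow> real \<Rightarrow> real" where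
  "Rf p x N y n t = (\<Sum>l\<in>{0..p}. (a_coef x N n ^ (2*l) * y (n - 1) (2*l) * lidstone l ((x N - t) / (x N - x 0))
        + a_coef x N n ^ (2*l) * y n (2*l) * lidstone l ((t - x 0) / (x N - x 0))) * (x N - x 0) ^ (2*l))"

lemma u1_deriv: "((\<lambda>t. (b - t) / c) has_real_derivative -1/c) (at t)"
  by (rule DERIV_cong[OF DERIV_cdivide[OF DERIV_diff[OF DERIV_const DERIV_ident]]]) simp

lemma u2_deriv: "((\<lambda>t. (t - b) / c) has_real_derivative 1/c) (at t)"
  by (rule DERIV_cong[OF DERIV_cdivide[OF DERIV_diff[OF DERIV_ident DERIV_const]]]) simp

lemma Pf_eq: "Pf p x N y = (\<lambda>t. \<Sum>l\<in>{0..p}. (y 0 (2*l) * lidstone l ((x N - t) / (x N - x 0))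
        + y N (2*l) * lidstone l ((t - x 0) / (x N - x 0))) * (x N - x 0) ^ (2*l))"
  by (rule ext) (simp add: Pf_def)

lemma Rf_eq: "Rf p x N y n = (\<lambda>t. \<Sum>l\<in>{0..p}. (a_coef x N n ^ (2*l) * y (n - 1) (2*l) * lidstone l ((x N - t) / (x N - x 0))
        + a_coef x N n ^ (2*l) * y n (2*l) * lidstone l ((t - x 0) / (x N - x 0))) * (x N - x 0) ^ (2*l))"
  by (rule ext) (simp add: Rf_def)

lemma Pf_deriv:
  "(deriv^^m) (Pf p x N y) = (\<lambda>t. \<Sum>l\<in>{0..p}. (y 0 (2*l) * (-1/(x N - x 0))^m * (deriv^^m) (lidstone l) ((x N - t) / (x N - x 0))
        + y N (2*l) * (1/(x N - x 0))^m * (deriv^^m) (lidstone l) ((t - x 0) / (x N - x 0))) * (x N - x 0) ^ (2*l))"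
  and Pf_smooth: "smooth (Pf p x N y)"
proof -
  have e: "Pf p x N y = (\<lambda>t. \<Sum>l\<in>{0..p}. (y 0 (2*l) * lidstone l ((x N - t) / (x N - x 0))
        + y N (2*l) * lidstone l ((t - x 0) / (x N - x 0))) * (x N - x 0) ^ (2*l))"
    by (rule ext) (simp add: Pf_def)
  note sc = smooth_comb[where S="{0..p}" and G=lidstone and A="\<lambda>l. y 0 (2*l)" and B="\<lambda>l. y N (2*l)"
      and C="\<lambda>l. (x N - x 0) ^ (2*l)" and ?u1.0="\<lambda>t. (x N - t) / (x N - x 0)" and ?u2.0="\<lambda>t. (t - x 0) / (x N - x 0)",
      OF finite_atLeastAtMost smooth_lid u1_deriv u2_deriv]
  show "(deriv^^m) (Pf p x N y) = (\<lambda>t. \<Sum>l\<in>{0..p}. (y 0 (2*l) * (-1/(x N - x 0))^m * (deriv^^m) (lidstone l) ((x N - t) / (x N - x 0))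
        + y N (2*l) * (1/(x N - x 0))^m * (deriv^^m) (lidstone l) ((t - x 0) / (x N - x 0))) * (x N - x 0) ^ (2*l))"
    unfolding e by (rule sc(1))
  show "smooth (Pf p x N y)" unfolding e by (rule sc(2))
qed

lemma Rf_deriv:
  "(deriv^^m) (Rf p x N y n) = (\<lambda>t. \<Sum>l\<in>{0..p}. (a_coef x N n ^ (2*l) * y (n - 1) (2*l) * (-1/(x N - x 0))^m * (deriv^^m) (lidstone l) ((x N - t) / (x N - x 0))
        + a_coef x N n ^ (2*l) * y n (2*l) * (1/(x N - x 0))^m * (deriv^^m) (lidstone l) ((t - x 0) / (x N - x 0))) * (x N - x 0) ^ (2*l))"
  and Rf_smooth: "smooth (Rf p x N y n)"
proof -
  have e: "Rf p x N y n = (\<lambda>t. \<Sum>l\<in>{0..p}. (a_coef x N n ^ (2*l) * y (n - 1) (2*l) * lidstone l ((x N - t) / (x N - x 0))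
        + a_coef x N n ^ (2*l) * y n (2*l) * lidstone l ((t - x 0) / (x N - x 0))) * (x N - x 0) ^ (2*l))"
    by (rule ext) (simp add: Rf_def)
  note sc = smooth_comb[where S="{0..p}" and G=lidstone and A="\<lambda>l. a_coef x N n ^ (2*l) * y (n - 1) (2*l)" and B="\<lambda>l. a_coef x N n ^ (2*l) * y n (2*l)"
      and C="\<lambda>l. (x N - x 0) ^ (2*l)" and ?u1.0="\<lambda>t. (x N - t) / (x N - x 0)" and ?u2.0="\<lambda>t. (t - x 0) / (x N - x 0)",
      OF finite_atLeastAtMost smooth_lid u1_deriv u2_deriv]
  show "(deriv^^m) (Rf p x N y n) = (\<lambda>t. \<Sum>l\<in>{0..p}. (a_coef x N n ^ (2*l) * y (n - 1) (2*l) * (-1/(x N - x 0))^m * (deriv^^m) (lidstone l) ((x N - t) / (x N - x 0))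
        + a_coef x N n ^ (2*l) * y n (2*l) * (1/(x N - x 0))^m * (deriv^^m) (lidstone l) ((t - x 0) / (x N - x 0))) * (x N - x 0) ^ (2*l))"
    unfolding e by (rule sc(1))
  show "smooth (Rf p x N y n)" unfolding e by (rule sc(2))
qed

lemma phi_smooth: "smooth (phi_piece p x y n)"
proof -
  have e: "phi_piece p x y n = (\<lambda>t. \<Sum>l\<in>{0..p}. (y (n - 1) (2*l) * lidstone l ((x n - t) / (x n - x (n - 1)))
                 + y n (2*l) * lidstone l ((t - x (n - 1)) / (x n - x (n - 1)))) * (x n - x (n - 1)) ^ (2*l))"
    by (rule ext) (simp add: phi_piece_def)
  note sc = smooth_comb[where S="{0..p}" and G=lidstone and A="\<lambda>l. y (n - 1) (2*l)" and B="\<lambda>l. y n (2*l)"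
      and C="\<lambda>l. (x n - x (n - 1)) ^ (2*l)" and ?u1.0="\<lambda>t. (x n - t) / (x n - x (n - 1))" and ?u2.0="\<lambda>t. (t - x (n - 1)) / (x n - x (n - 1))",
      OF finite_atLeastAtMost smooth_lid u1_deriv u2_deriv]
  show ?thesis unfolding e by (rule sc(2))
qed

lemma q_eq: "q_fun p x N y \<alpha> n = (\<lambda>t. Rf p x N y n t - \<alpha> n * Pf p x N y t)"
  by (rule ext) (simp add: q_fun_def Rf_def Pf_def sum_distrib_left sum_subtractf[symmetric] algebra_simps)

lemma q_smooth: "smooth (q_fun p x N y \<alpha> n)"
  and q_deriv: "(deriv^^m) (q_fun p x N y \<alpha> n) = (\<lambda>t. (deriv^^m) (Rf p x N y n) t - \<alpha> n * (deriv^^m) (Pf p x N y) t)"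
  unfolding q_eq by (rule smooth_lin[OF Rf_smooth Pf_smooth])+

lemma alg0: assumes "(xN::real) \<noteq> x0"
  shows "(xn - xp) / (xN - x0) * t + (xN * xp - x0 * xn) / (xN - x0) = xp + (xn - xp) / (xN - x0) * (t - x0)"
proof -
  define d where "d = xN - x0"
  have d: "xN = x0 + d" "d \<noteq> 0" using assms by (auto simp: d_def)
  show ?thesis unfolding d(1) using d(2) by (simp add: field_simps)
qed
lemma alg1: assumes "(xN::real) \<noteq> x0" "xn \<noteq> xp"
  shows "(xn - (xp + (xn - xp) / (xN - x0) * (t - x0))) / (xn - xp) = (xN - t) / (xN - x0)"
proof -
  define d where "d = xN - x0"
  have d: "xN = x0 + d" "d \<noteq> 0" using assms by (auto simp: d_def)
  define h where "h = xn - xp"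
  have h: "xn = xp + h" "h \<noteq> 0" using assms by (auto simp: h_def)
  show ?thesis unfolding d(1) h(1) using d(2) h(2) by (simp add: field_simps)
qed
lemma alg2: assumes "(xN::real) \<noteq> x0" "xn \<noteq> xp"
  shows "(xp + (xn - xp) / (xN - x0) * (t - x0) - xp) / (xn - xp) = (t - x0) / (xN - x0)"
proof -
  define d where "d = xN - x0"
  have d: "xN = x0 + d" "d \<noteq> 0" using assms by (auto simp: d_def)
  define h where "h = xn - xp"
  have h: "xn = xp + h" "h \<noteq> 0" using assms by (auto simp: h_def)
  show ?thesis unfolding d(1) h(1) using d(2) h(2) by (simp add: field_simps)
qed

lemma L_map_alt: "x N \<noteq> x 0 \<Longrightarrow> L_map x N n t = x (n - 1) + a_coef x N n * (t - x 0)"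
  unfolding L_map_def a_coef_def by (rule alg0)

lemma L_map_deriv: "(L_map x N n has_real_derivative a_coef x N n) (at t)"
proof -
  have e: "L_map x N n = (\<lambda>t. a_coef x N n * t + (x N * x (n - 1) - x 0 * x n) / (x N - x 0))"
    by (rule ext) (simp add: L_map_def)
  show ?thesis unfolding e by (rule DERIV_cong, (rule derivative_eq_intros refl)+) simp
qed

lemma phi_L:
  assumes h: "x (n - 1) < x n" and L: "x 0 < x N"
  shows "(\<lambda>t. phi_piece p x y n (L_map x N n t)) = Rf p x N y n"
proof (rule ext)
  fix t
  let ?h = "x n - x (n - 1)" and ?L = "x N - x 0" and ?a = "a_coef x N n"
  have hp: "?h \<noteq> 0" and Lp: "?L \<noteq> 0" using h L by auto
  have a: "?a = ?h / ?L" by (simp add: a_coef_def)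
  have Lm: "L_map x N n t = x (n - 1) + ?a * (t - x 0)" using L_map_alt L by force
  have e1: "(x n - L_map x N n t) / ?h = (x N - t) / ?L"
    unfolding Lm a using h L by (intro alg1) auto
  have e2: "(L_map x N n t - x (n - 1)) / ?h = (t - x 0) / ?L"
    unfolding Lm a using h L by (intro alg2) auto
  have e3: "?h ^ (2*l) = ?a ^ (2*l) * ?L ^ (2*l)" for l
    unfolding a using Lp by (simp add: power_divide)
  show "phi_piece p x y n (L_map x N n t) = Rf p x N y n t"
    unfolding phi_piece_def Rf_def e1 e2 e3 by (intro sum.cong refl) (simp add: algebra_simps)
qed

lemma term_bound:
  assumes s: "0 \<le> s1" "0 \<le> s2" "s1 + s2 = 1" and AB: "\<bar>A\<bar> \<le> \<rho>" "\<bar>B\<bar> \<le> \<rho>"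
  shows "\<bar>A * lidstone j s1 + B * lidstone j s2\<bar> \<le> 2*\<rho>*pi/3 / pi^(2*j)"
proof (cases j)
  case 0
  have r: "0 \<le> \<rho>" using AB by linarith
  have "\<bar>A * s1 + B * s2\<bar> \<le> \<bar>A\<bar> * s1 + \<bar>B\<bar> * s2"
    using s by (simp add: abs_mult abs_triangle_ineq order_trans[OF abs_triangle_ineq])
  also have "\<dots> \<le> \<rho> * s1 + \<rho> * s2" using s AB by (intro add_mono mult_right_mono) auto
  also have "\<dots> = \<rho>" using s by (simp add: distrib_left[symmetric])
  also have "\<dots> \<le> 2*\<rho>*pi/3"
  proof -
    have "\<rho>*3 \<le> \<rho>*(2*pi)" using r pi_ge_two by (intro mult_left_mono) auto
    then have "\<rho> * 3 \<le> 2 * (\<rho> * pi)" by (simp add: mult.left_commute)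
    then show ?thesis by (simp add: field_simps)
  qed
  finally show ?thesis using 0 by simp
next
  case (Suc i)
  have r: "0 \<le> \<rho>" using AB by linarith
  let ?b = "1/(3*pi^(2*i+1))"
  have l1: "\<bar>lidstone (Suc i) s1\<bar> \<le> ?b" and l2: "\<bar>lidstone (Suc i) s2\<bar> \<le> ?b"
    using lid_bound s by auto
  have "\<bar>A * lidstone (Suc i) s1 + B * lidstone (Suc i) s2\<bar> \<le> \<bar>A\<bar> * \<bar>lidstone (Suc i) s1\<bar> + \<bar>B\<bar> * \<bar>lidstone (Suc i) s2\<bar>"
    by (metis abs_mult abs_triangle_ineq)
  also have "\<dots> \<le> \<rho> * ?b + \<rho> * ?b" using AB l1 l2 r by (intro add_mono mult_mono) auto
  also have "\<dots> = 2*\<rho>*pi/3 / pi^(2*Suc i)" by (simp add: field_simps)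
  finally show ?thesis using Suc by simp
qed

lemma rho_ge:
  assumes "l \<le> p"
  shows "\<bar>y 0 (2*l)\<bar> \<le> rho_max p N y" "\<bar>y N (2*l)\<bar> \<le> rho_max p N y"
proof -
  have "max \<bar>y 0 (2*l)\<bar> \<bar>y N (2*l)\<bar> \<le> rho_max p N y"
    unfolding rho_max_def using assms by (intro Max_ge) auto
  then show "\<bar>y 0 (2*l)\<bar> \<le> rho_max p N y" "\<bar>y N (2*l)\<bar> \<le> rho_max p N y" by auto
qed

lemma Pf_bound:
  assumes L: "x 0 < x N" and k: "1 \<le> k" "k \<le> p" and t: "t \<in> {x 0..x N}"
  shows "\<bar>(deriv^^(2*k)) (Pf p x N y) t\<bar> \<le> M_const k p x N y"
proof -
  define Lg where "Lg = x N - x 0"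
  define s1 where "s1 = (x N - t) / Lg"
  define s2 where "s2 = (t - x 0) / Lg"
  define \<rho> where "\<rho> = rho_max p N y"
  have Lg: "0 < Lg" using L by (simp add: Lg_def)
  have s: "0 \<le> s1" "0 \<le> s2" "s1 + s2 = 1"
  proof -
    show "0 \<le> s1" "0 \<le> s2" unfolding s1_def s2_def using t Lg by auto
    have "s1 + s2 = ((x N - t) + (t - x 0)) / Lg" unfolding s1_def s2_def by (rule add_divide_distrib[symmetric])
    also have "\<dots> = 1" using Lg by (simp add: Lg_def)
    finally show "s1 + s2 = 1" .
  qed
  define T where "T = (\<lambda>l. if l < k then 0 else 2*\<rho>*pi/3 * (Lg/pi)^(2*(l-k)))"
  define trm where "trm = (\<lambda>l. (y 0 (2*l) * (-1/Lg)^(2*k) * (deriv^^(2*k)) (lidstone l) s1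
        + y N (2*l) * (1/Lg)^(2*k) * (deriv^^(2*k)) (lidstone l) s2) * Lg ^ (2*l))"
  have eq: "(deriv^^(2*k)) (Pf p x N y) t = (\<Sum>l\<in>{0..p}. trm l)"
    unfolding Pf_deriv trm_def s1_def s2_def Lg_def by simp
  have tb: "\<bar>trm l\<bar> \<le> T l" if l: "l \<in> {0..p}" for l
  proof (cases "l < k")
    case True
    then show ?thesis unfolding trm_def T_def using lid_deriv_even_big[OF True] by simp
  next
    case False
    define j where "j = l - k"
    have lj: "l = j + k" using False by (simp add: j_def)
    have m1: "(-1/Lg)^(2*k) = (1/Lg)^(2*k)"
      by (simp add: power_mult)
    have pw: "(1/Lg)^(2*k) * Lg^(2*l) = Lg^(2*j)"
      using Lg unfolding lj by (simp add: power_add power_one_over field_simps)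
    have "trm l = (y 0 (2*l) * lidstone j s1 + y N (2*l) * lidstone j s2) * ((1/Lg)^(2*k) * Lg^(2*l))"
      unfolding trm_def m1 lid_deriv_even[of k l, OF leI[OF False], folded j_def]
      by (simp add: algebra_simps)
    also have "\<dots> = (y 0 (2*l) * lidstone j s1 + y N (2*l) * lidstone j s2) * Lg^(2*j)"
      by (simp add: pw)
    finally have te: "trm l = (y 0 (2*l) * lidstone j s1 + y N (2*l) * lidstone j s2) * Lg^(2*j)" .
    have hb: "\<bar>y 0 (2*l) * lidstone j s1 + y N (2*l) * lidstone j s2\<bar> \<le> 2*\<rho>*pi/3 / pi^(2*j)"
      using term_bound[OF s] rho_ge[of l p] l unfolding \<rho>_def by auto
    have ap: "\<bar>Lg^(2*j)\<bar> = Lg^(2*j)" using Lg by simp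
    have "\<bar>trm l\<bar> \<le> 2*\<rho>*pi/3 / pi^(2*j) * Lg^(2*j)"
      unfolding te abs_mult ap by (rule mult_right_mono[OF hb]) (use Lg in simp)
    also have "\<dots> = T l" unfolding T_def j_def[symmetric] using False
      by (simp add: power_divide)
    finally show ?thesis .
  qed
  have "\<bar>(\<Sum>l\<in>{0..p}. trm l)\<bar> \<le> (\<Sum>l\<in>{0..p}. T l)"
    by (rule order_trans[OF sum_abs sum_mono]) (use tb in auto)
  also have "(\<Sum>l\<in>{0..p}. T l) = (\<Sum>l\<in>{k..p}. T l)"
    by (rule sum.mono_neutral_right) (auto simp: T_def)
  also have "\<dots> = (\<Sum>j\<in>{0..p-k}. T (j + k))"
  proof -
    have "{k..p} = {0+k..(p-k)+k}" using k by simp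
    then show ?thesis by (simp only: sum.shift_bounds_cl_nat_ivl)
  qed
  also have "\<dots> = (\<Sum>j\<in>{0..p-k}. 2*\<rho>*pi/3 * (Lg/pi)^(2*j))"
    by (intro sum.cong) (auto simp: T_def)
  also have "\<dots> = M_const k p x N y"
    unfolding M_const_def \<rho>_def Lg_def by (simp add: sum_distrib_left)
  finally show ?thesis using eq by simp
qed

lemma cont_bound:
  fixes f :: "real \<Rightarrow> real"
  assumes "continuous_on {a..b} f" shows "\<exists>B. \<forall>t\<in>{a..b}. \<bar>f t\<bar> \<le> (B::real)"
proof -
  have "bounded (f ` {a..b})" by (rule compact_imp_bounded[OF compact_continuous_image[OF assms compact_Icc]])
  then show ?thesis unfolding bounded_real by auto
qed

theorem corollary4p2:
  fixes p N k :: nat and x :: "nat \<Rightarrow> real" and y :: "nat \<Rightarrow> nat \<Rightarrow> real"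
    and \<alpha> :: "nat \<Rightarrow> real" and f :: "real \<Rightarrow> real" and D :: "nat \<Rightarrow> real \<Rightarrow> real"
  assumes N_pos: "1 \<le> N"
    and x_incr: "\<forall>n<N. x n < x (Suc n)"
    and alpha: "\<alpha> \<in> Theta p x N"
    and D0: "D 0 = f"
    and D_deriv: "\<forall>j<2*p. \<forall>t\<in>{x 0..x N}.
                    (D j has_real_derivative D (Suc j) t) (at t within {x 0..x N})"
    and D_cont: "continuous_on {x 0..x N} (D (2*p))"
    and fif: "\<forall>n\<in>{1..N}. \<forall>t\<in>{x 0..x N}.
                f (L_map x N n t) = \<alpha> n * f t + q_fun p x N y \<alpha> n t"
    and k: "1 \<le> k" "k \<le> p"
    and contr: "alpha_norm N \<alpha> < mu_min x N ^ (2*k)"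
  shows "Sup {\<bar>D (2*k) t - (deriv ^^ (2*k)) (phi_piece p x y n) t\<bar> | n t.
                 n \<in> {1..N} \<and> t \<in> {x (n - 1)..x n}}
         \<le> alpha_norm N \<alpha> / (mu_min x N ^ (2*k) - alpha_norm N \<alpha>)
            * (Sup {\<bar>(deriv ^^ (2*k)) (phi_piece p x y n) t\<bar> | n t.
                      n \<in> {1..N} \<and> t \<in> {x (n - 1)..x n}}
               + M_const k p x N y)"
proof -
  define S1 where "S1 = {\<bar>D (2*k) t - (deriv ^^ (2*k)) (phi_piece p x y n) t\<bar> | n t.
                 n \<in> {1..N} \<and> t \<in> {x (n - 1)..x n}}"
  define S2 where "S2 = {\<bar>(deriv ^^ (2*k)) (phi_piece p x y n) t\<bar> | n t.
                      n \<in> {1..N} \<and> t \<in> {x (n - 1)..x n}}"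
  define A where "A = alpha_norm N \<alpha>"
  define \<mu> where "\<mu> = mu_min x N"
  define M where "M = M_const k p x N y"
  define \<Phi> where "\<Phi> = (\<lambda>n. (deriv ^^ (2*k)) (phi_piece p x y n))"
  define P2 where "P2 = (deriv ^^ (2*k)) (Pf p x N y)"
  define I where "I = {x 0..x N}"
  have L0: "x 0 < x N" using x_mono[OF x_incr, of 0 N] N_pos by simp
  have hpos: "x (n-1) < x n" if "n \<in> {1..N}" for n
    using x_mono[OF x_incr, of "n-1" n] that by auto
  have seg_I: "{x (n-1)..x n} \<subseteq> I" if "n \<in> {1..N}" for n
    using x_mono_le[OF x_incr, of 0 "n-1"] x_mono_le[OF x_incr, of n N] that by (auto simp: I_def)
  have apos: "0 < a_coef x N n" if "n \<in> {1..N}" for n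
    unfolding a_coef_def using hpos[OF that] L0 by simp
  have A_ge: "\<bar>\<alpha> n\<bar> \<le> A" if "n \<in> {1..N}" for n
    unfolding A_def alpha_norm_def using that by (intro Max_ge) auto
  have A_nn: "0 \<le> A" using A_ge[of 1] N_pos by simp
  have mu_le: "\<mu> \<le> a_coef x N n" if "n \<in> {1..N}" for n
    unfolding \<mu>_def mu_min_def using that by (intro Min_le) auto
  have mu_pos: "0 < \<mu>"
  proof -
    have "\<mu> \<in> a_coef x N ` {1..N}" unfolding \<mu>_def mu_min_def using N_pos by (intro Min_in) auto
    then show ?thesis using apos by auto
  qed
  have Lm_eq: "L_map x N n t = x (n-1) + a_coef x N n * (t - x 0)" for n t
    using L_map_alt L0 by force
  have Lm_seg: "L_map x N n t \<in> {x (n-1)..x n}" if n: "n \<in> {1..N}" and t: "t \<in> I" for n t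
  proof -
    have a: "a_coef x N n * (x N - x 0) = x n - x (n-1)" unfolding a_coef_def using L0 by simp
    have "0 \<le> a_coef x N n * (t - x 0)" using apos[OF n] t by (auto simp: I_def)
    moreover have "a_coef x N n * (t - x 0) \<le> a_coef x N n * (x N - x 0)"
      using apos[OF n] t by (intro mult_left_mono) (auto simp: I_def)
    ultimately show ?thesis unfolding Lm_eq a by auto
  qed
  have Lm_inv: "\<exists>s\<in>I. L_map x N n s = \<tau>" if n: "n \<in> {1..N}" and \<tau>: "\<tau> \<in> {x (n-1)..x n}" for n \<tau>
  proof -
    define s where "s = x 0 + (\<tau> - x (n-1)) / a_coef x N n"
    have a: "a_coef x N n * (x N - x 0) = x n - x (n-1)" unfolding a_coef_def using L0 by simp
    have an: "a_coef x N n \<noteq> 0" using apos[OF n] by simp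
    have Ls: "L_map x N n s = \<tau>" unfolding Lm_eq s_def using an by simp
    have "0 \<le> (\<tau> - x (n-1)) / a_coef x N n" using \<tau> apos[OF n] by auto
    moreover have "(\<tau> - x (n-1)) / a_coef x N n \<le> x N - x 0"
      using \<tau> apos[OF n] a by (simp add: divide_le_eq mult.commute)
    ultimately have "s \<in> I" unfolding s_def I_def by auto
    then show ?thesis using Ls by blast
  qed
  have KR: "a_coef x N n ^ (2*k) * (D (2*k) (L_map x N n t) - \<Phi> n (L_map x N n t))
            = \<alpha> n * (D (2*k) t - P2 t)" if n: "n \<in> {1..N}" and t: "t \<in> I" for n t
  proof -
    have r1: "a_coef x N n ^ (2*k) * D (2*k) (L_map x N n t) = \<alpha> n * D (2*k) t + (deriv^^(2*k)) (q_fun p x N y \<alpha> n) t"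
    proof (rule D_rel_gen[where lo="x 0" and hi="x N" and K="2*p"])
      show "x 0 < x N" by (rule L0)
      show "L_map x N n t \<in> {x 0..x N}" if "t \<in> {x 0..x N}" for t
        using Lm_seg[OF n, of t] seg_I[OF n] that by (auto simp: I_def)
      show "(L_map x N n has_real_derivative a_coef x N n) (at t)" for t by (rule L_map_deriv)
      show "\<forall>j<2*p. \<forall>t\<in>{x 0..x N}. (D j has_real_derivative D (Suc j) t) (at t within {x 0..x N})"
        by (rule D_deriv)
      show "D 0 (L_map x N n t) = \<alpha> n * D 0 t + q_fun p x N y \<alpha> n t" if "t \<in> {x 0..x N}" for t
        using fif n that D0 by simp
      show "smooth (q_fun p x N y \<alpha> n)" by (rule q_smooth)
      show "2*k \<le> 2*p" using k by simp
      show "t \<in> {x 0..x N}" using t by (simp add: I_def)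
    qed
    have r2: "(deriv^^(2*k)) (Rf p x N y n) t = a_coef x N n ^ (2*k) * \<Phi> n (L_map x N n t)"
    proof -
      have "(deriv^^(2*k)) (\<lambda>t. phi_piece p x y n (L_map x N n t)) = (\<lambda>t. a_coef x N n ^ (2*k) * (deriv^^(2*k)) (phi_piece p x y n) (L_map x N n t))"
        by (rule smooth_comp[OF phi_smooth L_map_deriv])
      then show ?thesis unfolding phi_L[OF hpos[OF n] L0] \<Phi>_def by simp
    qed
    have r3: "(deriv^^(2*k)) (q_fun p x N y \<alpha> n) t = (deriv^^(2*k)) (Rf p x N y n) t - \<alpha> n * P2 t"
      unfolding q_deriv P2_def by simp
    show ?thesis using r1 r2 r3 by (simp add: algebra_simps)
  qed
  have contD: "continuous_on I (D (2*k))"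
  proof (cases "k = p")
    case True then show ?thesis using D_cont by (simp add: I_def)
  next
    case False
    then have "2*k < 2*p" using k by simp
    then show ?thesis unfolding I_def continuous_on_eq_continuous_within
      using D_deriv DERIV_continuous by blast
  qed
  obtain BD where BD: "\<forall>t\<in>I. \<bar>D (2*k) t\<bar> \<le> BD" using cont_bound[OF contD[unfolded I_def]] I_def by auto
  have "\<forall>n. \<exists>B. \<forall>t\<in>{x (n-1)..x n}. \<bar>\<Phi> n t\<bar> \<le> B"
    unfolding \<Phi>_def using cont_bound[OF smooth_cont[OF phi_smooth]] by blast
  then obtain Bf where Bf: "\<And>n t. t \<in> {x (n-1)..x n} \<Longrightarrow> \<bar>\<Phi> n t\<bar> \<le> Bf n" by metis
  define BP where "BP = (\<Sum>n\<in>{1..N}. \<bar>Bf n\<bar>)"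
  have BP: "\<bar>\<Phi> n t\<bar> \<le> BP" if "n \<in> {1..N}" "t \<in> {x (n-1)..x n}" for n t
  proof -
    have "\<bar>Bf n\<bar> \<le> BP" unfolding BP_def using that by (intro member_le_sum) auto
    then show ?thesis using Bf[OF that(2)] by linarith
  qed
  have ne1: "S1 \<noteq> {}" and ne2: "S2 \<noteq> {}"
  proof -
    have xin: "x 0 \<in> {x (1-1)..x 1}" using hpos[of 1] N_pos by auto
    have "\<bar>D (2*k) (x 0) - \<Phi> 1 (x 0)\<bar> \<in> S1" unfolding S1_def \<Phi>_def mem_Collect_eq
      by (intro exI[of _ 1] exI[of _ "x 0"]) (use N_pos xin in auto)
    then show "S1 \<noteq> {}" by auto
    have "\<bar>\<Phi> 1 (x 0)\<bar> \<in> S2" unfolding S2_def \<Phi>_def mem_Collect_eq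
      by (intro exI[of _ 1] exI[of _ "x 0"]) (use N_pos xin in auto)
    then show "S2 \<noteq> {}" by auto
  qed
  have bdd1: "bdd_above S1"
  proof (rule bdd_aboveI)
    fix e assume "e \<in> S1"
    then obtain n t where e: "e = \<bar>D (2*k) t - \<Phi> n t\<bar>" "n \<in> {1..N}" "t \<in> {x (n-1)..x n}"
      unfolding S1_def \<Phi>_def by blast
    have "\<bar>D (2*k) t\<bar> \<le> BD" using BD seg_I[OF e(2)] e(3) by blast
    then show "e \<le> BD + BP" using e BP[OF e(2,3)] by linarith
  qed
  have bdd2: "bdd_above S2"
  proof (rule bdd_aboveI)
    fix e assume "e \<in> S2"
    then obtain n t where e: "e = \<bar>\<Phi> n t\<bar>" "n \<in> {1..N}" "t \<in> {x (n-1)..x n}"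
      unfolding S2_def \<Phi>_def by blast
    then show "e \<le> BP" using BP by blast
  qed
  define E where "E = Sup S1"
  define F where "F = Sup S2"
  have E_ge: "\<bar>D (2*k) t - \<Phi> n t\<bar> \<le> E" if "n \<in> {1..N}" "t \<in> {x (n-1)..x n}" for n t
    unfolding E_def by (rule cSup_upper[OF _ bdd1]) (use that in \<open>auto simp: S1_def \<Phi>_def\<close>)
  have F_ge: "\<bar>\<Phi> n t\<bar> \<le> F" if "n \<in> {1..N}" "t \<in> {x (n-1)..x n}" for n t
    unfolding F_def by (rule cSup_upper[OF _ bdd2]) (use that in \<open>auto simp: S2_def \<Phi>_def\<close>)
  have D_le: "\<bar>D (2*k) s\<bar> \<le> E + F" if s: "s \<in> I" for s
  proof -
    have "\<exists>m\<in>{1..N}. x (m-1) \<le> s \<and> s \<le> x m"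
      by (rule seg_exists[OF x_incr N_pos]) (use s in \<open>auto simp: I_def\<close>)
    then obtain m where m: "m \<in> {1..N}" "x (m-1) \<le> s" "s \<le> x m" by blast
    have "\<bar>D (2*k) s - \<Phi> m s\<bar> \<le> E" "\<bar>\<Phi> m s\<bar> \<le> F" using E_ge F_ge m by auto
    then show ?thesis by linarith
  qed
  have c_pos: "0 < \<mu> ^ (2*k)" using mu_pos by simp
  have elem: "e \<le> A * (E + F + M) / \<mu> ^ (2*k)" if "e \<in> S1" for e
  proof -
    obtain n \<tau> where e: "e = \<bar>D (2*k) \<tau> - \<Phi> n \<tau>\<bar>" "n \<in> {1..N}" "\<tau> \<in> {x (n-1)..x n}"
      using \<open>e \<in> S1\<close> unfolding S1_def \<Phi>_def by blast
    obtain s where s: "s \<in> I" "L_map x N n s = \<tau>" using Lm_inv[OF e(2,3)] by blast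
    have e0: "0 \<le> e" using e by simp
    have kr: "a_coef x N n ^ (2*k) * (D (2*k) \<tau> - \<Phi> n \<tau>) = \<alpha> n * (D (2*k) s - P2 s)"
      using KR[OF e(2) s(1)] s(2) by simp
    have ap: "\<bar>a_coef x N n ^ (2*k)\<bar> = a_coef x N n ^ (2*k)" using apos[OF e(2)] by simp
    have "a_coef x N n ^ (2*k) * e = \<bar>a_coef x N n ^ (2*k) * (D (2*k) \<tau> - \<Phi> n \<tau>)\<bar>"
      unfolding e(1) abs_mult ap ..
    also have "\<dots> = \<bar>\<alpha> n\<bar> * \<bar>D (2*k) s - P2 s\<bar>" unfolding kr abs_mult ..
    finally have "a_coef x N n ^ (2*k) * e = \<bar>\<alpha> n\<bar> * \<bar>D (2*k) s - P2 s\<bar>" .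
    also have "\<dots> \<le> A * (E + F + M)"
    proof (rule mult_mono)
      show "\<bar>\<alpha> n\<bar> \<le> A" by (rule A_ge[OF e(2)])
      have "\<bar>P2 s\<bar> \<le> M" unfolding P2_def M_def using Pf_bound[OF L0 k] s(1) by (simp add: I_def)
      then show "\<bar>D (2*k) s - P2 s\<bar> \<le> E + F + M" using D_le[OF s(1)] by linarith
    qed (use A_nn in auto)
    finally have h1: "a_coef x N n ^ (2*k) * e \<le> A * (E + F + M)" .
    have "\<mu> ^ (2*k) * e \<le> a_coef x N n ^ (2*k) * e"
      using mu_le[OF e(2)] mu_pos e0 by (intro mult_right_mono power_mono) auto
    then have "\<mu> ^ (2*k) * e \<le> A * (E + F + M)" using h1 by linarith
    then show ?thesis using c_pos by (simp add: pos_le_divide_eq mult.commute)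
  qed
  have "Sup S1 \<le> A * (E + F + M) / \<mu> ^ (2*k)"
    by (rule cSup_least[OF ne1]) (rule elem)
  then have "E \<le> A * (E + F + M) / \<mu> ^ (2*k)" by (simp only: E_def[symmetric])
  then have "E * \<mu> ^ (2*k) \<le> A * (E + F + M)" using c_pos by (simp add: pos_le_divide_eq)
  then have "E * (\<mu> ^ (2*k) - A) \<le> A * (F + M)" by (simp add: algebra_simps)
  moreover have dpos: "0 < \<mu> ^ (2*k) - A" using contr unfolding A_def \<mu>_def by simp
  ultimately have "E \<le> A * (F + M) / (\<mu> ^ (2*k) - A)" by (simp add: pos_le_divide_eq)
  then have "E \<le> A / (\<mu> ^ (2*k) - A) * (F + M)" by simp
  then show ?thesis unfolding E_def F_def S1_def S2_def A_def \<mu>_def M_def .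
qed

end
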